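(* Let $M$ be a Riemann surface and $n\le4$. Then (i) every extended solution $\Phi:M\to\Omega_r\mathrm U(n)^{\mathbb R}$ of canonical type is $S^1$-invariant; (ii) in particular, every such extended solution satisfies $\Phi_\lambda\Phi_{-1}=\Phi_{-\lambda}$ for all $\lambda\in S^1$, and so the corresponding harmonic map $\varphi=\Phi_{-1}$ maps into a real Grassmannian or, when $n=2m$, into $\mathrm O(2m)/\mathrm U(m)$.
   Context: Vectors/matrices are written w.r.t. a null basis of $\mathbb C^n$ with bilinear form $(v,w)=\sum_jv_jw_{\bar j}$, $\bar j=n+1-j$; $\mathrm O(n,\mathbb C)$ preserves it. $\Omega_r\mathrm U(n)^{\mathbb R}$ is the set of loops $\Phi=\sum_{k=0}^r\lambda^k\Phi_k$ in $\mathrm U(n)$ (parameter $\lambda\in S^1$) with $\Phi(1)=I$ and $\Phi^T\Phi=\lambda^rI$ (transpose w.r.t. the bilinear form). An extended solution is a smooth map $\Phi$ from $M$ to based loops in $\mathrm U(n)$ with $\Phi^{-1}\partial_z\Phi=(1-\lambda^{-1})A_z$ locally; $\Phi_\lambda(z)=\Phi(z)(\lambda)$; $S^1$-invariant means $\Phi_{\lambda\mu}=\Phi_\lambda\Phi_\mu$. A canonical element of $\Omega_r\mathrm U(n)^{\mathbb R}$ is $\xi=\mathrm i\,\mathrm{diag}(\xi_1,\dots,\xi_n)$ with integers $\xi_i-\xi_{i+1}\in\{0,1\}$, $\xi_1=r$, $\xi_n=0$, $\xi_{\bar i}=r-\xi_i$ (and $\xi_{n/2-1}=\xi_{n/2}$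 if $r$ odd); $\gamma_\xi=\mathrm{diag}(\lambda^{\xi_i})$. $\Phi$ is of canonical type if $\Phi=[A\gamma_\xi]$ for such a $\xi$ and a meromorphic $A$ with values in matrices $(a_{ij})$ of polynomials in $\lambda$ with $a_{ij}=\delta_{ij}$ if $\xi_i\le\xi_j$, $\deg a_{ij}\le\xi_i-\xi_j-1$ otherwise, $A(\lambda)\in\mathrm O(n,\mathbb C)$; $[\Psi]$ is the based unitary factor of $\Psi=\Phi B$ with $B$ holomorphic on the unit disc. "Maps into a real Grassmannian" means that (for $r$ even) $\pm\Phi_{-1}$ has the form $\pi_V-\pi_V^\perp$ for a real subbundle $V$; "into $\mathrm O(2m)/\mathrm U(m)$" means (for $r$ odd) $\pm\mathrm i\Phi_{-1}$ is an orthogonal complex structure on $\mathbb R^{2m}$ at each point. *)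

theory Defs
  imports "HOL-Analysis.Analysis" "HOL-Complex_Analysis.Complex_Analysis"
begin

text \<open>Matrices are functions nat => nat => complex, indexed by 1..n
  (entries outside {1..n} x {1..n} are irrelevant). The bilinear form is
  (v,w) = sum_j v_j w_(n+1-j).\<close>

type_synonym cmat = "nat \<Rightarrow> nat \<Rightarrow> complex"

definition idm :: cmat where
  "idm i j = (if i = j then 1 else 0)"

definition mmul :: "nat \<Rightarrow> cmat \<Rightarrow> cmat \<Rightarrow> cmat" where
  "mmul n A B = (\<lambda>i j. \<Sum>k\<in>{1..n}. A i k * B k j)"

definition msc :: "complex \<Rightarrow> cmat \<Rightarrow> cmat" where
  "msc c A = (\<lambda>i j. c * A i j)"

definition meq :: "nat \<Rightarrow> cmat \<Rightarrow> cmat \<Rightarrow> bool" where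
  "meq n A B \<longleftrightarrow> (\<forall>i\<in>{1..n}. \<forall>j\<in>{1..n}. A i j = B i j)"

definition ctr :: "cmat \<Rightarrow> cmat" where
  "ctr A = (\<lambda>i j. cnj (A j i))"

text \<open>transpose with respect to the bilinear form: (A v, w) = (v, A^T w)\<close>
definition btr :: "nat \<Rightarrow> cmat \<Rightarrow> cmat" where
  "btr n A = (\<lambda>i j. A (n + 1 - j) (n + 1 - i))"

definition unitary_mat :: "nat \<Rightarrow> cmat \<Rightarrow> bool" where
  "unitary_mat n A \<longleftrightarrow> meq n (mmul n (ctr A) A) idm"

text \<open>A matrix is real iff it commutes with the real structure
  c(v)_j = conj(v_(n+1-j)) (the real form on which the bilinear form is the
  Euclidean inner product).\<close>
definition real_mat :: "nat \<Rightarrow> cmat \<Rightarrow> bool" where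
  "real_mat n A \<longleftrightarrow> (\<forall>i\<in>{1..n}. \<forall>j\<in>{1..n}. cnj (A (n + 1 - i) (n + 1 - j)) = A i j)"

text \<open>Omega_r U(n)^R: polynomial loops of degree <= r, unitary on S^1, based
  (L 1 = I) and with L^T L = lambda^r I.  A loop is a function of lambda,
  only its values on the unit circle matter.\<close>
definition in_OmegaR :: "nat \<Rightarrow> nat \<Rightarrow> (complex \<Rightarrow> cmat) \<Rightarrow> bool" where
  "in_OmegaR n r L \<longleftrightarrow>
     (\<exists>C :: nat \<Rightarrow> cmat. \<forall>l\<in>sphere 0 1. meq n (L l) (\<lambda>i j. \<Sum>k\<le>r. l ^ k * C k i j)) \<and>
     (\<forall>l\<in>sphere 0 1. unitary_mat n (L l)) \<and>
     meq n (L 1) idm \<and>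
     (\<forall>l\<in>sphere 0 1. meq n (mmul n (btr n (L l)) (L l)) (msc (l ^ r) idm))"

text \<open>Real C-infinity functions on an open set M of the complex plane
  (all iterated real partial derivatives exist).\<close>
coinductive cinf :: "complex set \<Rightarrow> (complex \<Rightarrow> complex) \<Rightarrow> bool" for M where
  "\<lbrakk>\<forall>z\<in>M. (f has_derivative (\<lambda>h. of_real (Re h) * fx z + of_real (Im h) * fy z)) (at z);
    cinf M fx; cinf M fy\<rbrakk> \<Longrightarrow> cinf M f"

definition dz :: "(complex \<Rightarrow> complex) \<Rightarrow> complex \<Rightarrow> complex" where
  "dz f z = (frechet_derivative f (at z) 1 - \<i> * frechet_derivative f (at z) \<i>) / 2"

text \<open>Extended solution Phi : M -> Omega_r U(n)^R; Phi z l is the value of the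
  loop Phi(z) at l.\<close>
definition ext_sol :: "nat \<Rightarrow> nat \<Rightarrow> complex set \<Rightarrow> (complex \<Rightarrow> complex \<Rightarrow> cmat) \<Rightarrow> bool" where
  "ext_sol n r M Phi \<longleftrightarrow>
     (\<forall>z\<in>M. in_OmegaR n r (Phi z)) \<and>
     (\<forall>l\<in>sphere 0 1. \<forall>i\<in>{1..n}. \<forall>j\<in>{1..n}. cinf M (\<lambda>z. Phi z l i j)) \<and>
     (\<forall>z\<in>M. \<exists>Az :: cmat. \<forall>l\<in>sphere 0 1.
        meq n (\<lambda>i j. dz (\<lambda>w. Phi w l i j) z) (msc (1 - inverse l) (mmul n (Phi z l) Az)))"

text \<open>Canonical elements xi = i diag(xi_1,...,xi_n), indices 1..n.\<close>
definition canonical_xi :: "nat \<Rightarrow> nat \<Rightarrow> (nat \<Rightarrow> int) \<Rightarrow> bool" where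
  "canonical_xi n r xi \<longleftrightarrow>
     (\<forall>i\<in>{1..<n}. xi i - xi (i + 1) \<in> {0, 1}) \<and>
     xi 1 = int r \<and> xi n = 0 \<and>
     (\<forall>i\<in>{1..n}. xi (n + 1 - i) = int r - xi i) \<and>
     (odd r \<longrightarrow> 1 \<le> n div 2 - 1 \<longrightarrow> xi (n div 2 - 1) = xi (n div 2))"

definition gamma_xi :: "(nat \<Rightarrow> int) \<Rightarrow> complex \<Rightarrow> cmat" where
  "gamma_xi xi l = (\<lambda>i j. if i = j then l ^ nat (xi i) else 0)"

definition Amat :: "(nat \<Rightarrow> int) \<Rightarrow> (nat \<Rightarrow> nat \<Rightarrow> nat \<Rightarrow> complex \<Rightarrow> complex) \<Rightarrow> complex \<Rightarrow> complex \<Rightarrow> cmat" where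
  "Amat xi c z l = (\<lambda>i j. if xi i \<le> xi j then idm i j
                          else (\<Sum>k<nat (xi i - xi j). c i j k z * l ^ k))"

text \<open>[Psi] = Phi : Psi = Phi B on S^1 with B holomorphic on the unit disc
  (continuous up to the boundary) with values in GL(n,C).\<close>
definition based_unitary_factor :: "nat \<Rightarrow> (complex \<Rightarrow> cmat) \<Rightarrow> (complex \<Rightarrow> cmat) \<Rightarrow> bool" where
  "based_unitary_factor n Phi Psi \<longleftrightarrow>
     (\<exists>B :: complex \<Rightarrow> cmat.
        (\<forall>i\<in>{1..n}. \<forall>j\<in>{1..n}. (\<lambda>l. B l i j) holomorphic_on ball 0 1 \<and>
                                 continuous_on (cball 0 1) (\<lambda>l. B l i j)) \<and>
        (\<forall>l\<in>cball 0 1. \<exists>C. meq n (mmul n (B l) C) idm) \<and>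
        (\<forall>l\<in>sphere 0 1. meq n (Psi l) (mmul n (Phi l) (B l))))"

definition canonical_type :: "nat \<Rightarrow> nat \<Rightarrow> complex set \<Rightarrow> (complex \<Rightarrow> complex \<Rightarrow> cmat) \<Rightarrow> bool" where
  "canonical_type n r M Phi \<longleftrightarrow>
     (\<exists>xi c. canonical_xi n r xi \<and>
        (\<forall>i\<in>{1..n}. \<forall>j\<in>{1..n}. \<forall>k<nat (xi i - xi j). c i j k meromorphic_on M) \<and>
        (\<forall>z\<in>M. (\<forall>i\<in>{1..n}. \<forall>j\<in>{1..n}. \<forall>k<nat (xi i - xi j). c i j k analytic_on {z}) \<longrightarrow>
           (\<forall>l. meq n (mmul n (btr n (Amat xi c z l)) (Amat xi c z l)) idm) \<and>
           based_unitary_factor n (Phi z) (\<lambda>l. mmul n (Amat xi c z l) (gamma_xi xi l))))"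

definition S1_invariant :: "nat \<Rightarrow> complex set \<Rightarrow> (complex \<Rightarrow> complex \<Rightarrow> cmat) \<Rightarrow> bool" where
  "S1_invariant n M Phi \<longleftrightarrow>
     (\<forall>z\<in>M. \<forall>l\<in>sphere 0 1. \<forall>m\<in>sphere 0 1. meq n (Phi z (l * m)) (mmul n (Phi z l) (Phi z m)))"

text \<open>pm X = pi_V - pi_V^perp for a real subspace V (P = pi_V Hermitian
  projection commuting with the real structure).\<close>
definition real_grassmannian_pt :: "nat \<Rightarrow> cmat \<Rightarrow> bool" where
  "real_grassmannian_pt n X \<longleftrightarrow>
     (\<exists>s\<in>{1, -1}. \<exists>P. meq n (mmul n P P) P \<and> meq n (ctr P) P \<and> real_mat n P \<and>
        meq n (msc s X) (\<lambda>i j. 2 * P i j - idm i j))"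

definition orth_cx_structure_pt :: "nat \<Rightarrow> cmat \<Rightarrow> bool" where
  "orth_cx_structure_pt n X \<longleftrightarrow>
     (\<exists>s\<in>{1, -1}. let J = msc (s * \<i>) X in
        real_mat n J \<and> meq n (mmul n J J) (msc (-1) idm) \<and> meq n (mmul n (btr n J) J) idm)"

end

theory Submission
  imports Defs
begin


lemma zero_at_center:
  fixes g :: "complex \<Rightarrow> complex"
  assumes "g holomorphic_on ball 0 1" "continuous_on (cball 0 1) g" "\<forall>z\<in>sphere 0 1. g z = 0"
  shows "g 0 = 0"
proof -
  have "norm (g 0) \<le> 0"
    by (rule maximum_modulus_frontier[of g "ball 0 1"]) (use assms in auto)
  thus ?thesis by simp
qed

lemma poly_shift_split:
  fixes p :: "complex poly"
  assumes "\<forall>m<k. coeff p m = 0"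
  shows "poly p l = l^k * poly (poly_shift k p) l"
proof -
  have "p = monom 1 k * poly_shift k p"
    using assms by (auto simp: poly_eq_iff coeff_monom_mult coeff_poly_shift not_le)
  then have "poly p l = poly (monom 1 k * poly_shift k p) l" by simp
  thus ?thesis by (simp add: poly_monom)
qed

lemma sum_assoc3:
  fixes f :: "nat \<Rightarrow> complex"
  shows "(\<Sum>p\<in>A. (\<Sum>q\<in>B. f q * g q p) * h p) = (\<Sum>q\<in>B. f q * (\<Sum>p\<in>A. g q p * h p))"
  by (simp add: sum_distrib_left sum_distrib_right mult.assoc sum.swap[of _ A])

lemma sum_idm_left: "(\<Sum>p\<in>{1..n}. idm i p * f p) = (if i \<in> {1..n} then f i else 0)"
proof -
  have "(\<Sum>p\<in>{1..n}. idm i p * f p) = (\<Sum>p\<in>{1..n}. if i = p then f p else 0)"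
    by (rule sum.cong) (auto simp: idm_def)
  thus ?thesis by simp
qed

lemma sum_idm_right: "(\<Sum>p\<in>{1..n}. f p * idm p j) = (if j \<in> {1..n} then f j else 0)"
proof -
  have "(\<Sum>p\<in>{1..n}. f p * idm p j) = (\<Sum>p\<in>{1..n}. if p = j then f p else 0)"
    by (rule sum.cong) (auto simp: idm_def)
  thus ?thesis by simp
qed

lemma low_coeffs_vanish:
  fixes P :: "nat \<Rightarrow> nat \<Rightarrow> complex poly" and X Y :: "complex \<Rightarrow> cmat" and C :: cmat
  assumes hX: "\<forall>i\<in>{1..n}. \<forall>j\<in>{1..n}. (\<lambda>l. X l i j) holomorphic_on ball 0 1 \<and> continuous_on (cball 0 1) (\<lambda>l. X l i j)"
    and hY: "\<forall>i\<in>{1..n}. \<forall>j\<in>{1..n}. (\<lambda>l. Y l i j) holomorphic_on ball 0 1 \<and> continuous_on (cball 0 1) (\<lambda>l. Y l i j)"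
    and inv: "meq n (mmul n (X 0) C) idm"
    and eq: "\<forall>l\<in>sphere 0 1. \<forall>i\<in>{1..n}. \<forall>j\<in>{1..n}. (\<Sum>p\<in>{1..n}. poly (P i p) l * X l p j) = l^r * Y l i j"
  shows "\<forall>k<r. \<forall>i\<in>{1..n}. \<forall>p\<in>{1..n}. coeff (P i p) k = 0"
proof -
  have main: "k < r \<Longrightarrow> \<forall>i\<in>{1..n}. \<forall>p\<in>{1..n}. coeff (P i p) k = 0" for k
  proof (induction k rule: less_induct)
    case (less k)
    have lowz: "\<forall>m<k. coeff (P i p) m = 0" if "i\<in>{1..n}" "p\<in>{1..n}" for i p
      using less that by auto
    have z0: "(\<Sum>p\<in>{1..n}. coeff (P i p) k * X 0 p j) = 0" if ij: "i\<in>{1..n}" "j\<in>{1..n}" for i j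
    proof -
      define g where "g l = (\<Sum>p\<in>{1..n}. poly (poly_shift k (P i p)) l * X l p j) - l^(r-k) * Y l i j" for l
      have "g holomorphic_on ball 0 1"
        unfolding g_def using hX hY ij
        by (intro holomorphic_intros) auto
      moreover have "continuous_on (cball 0 1) g"
        unfolding g_def using hX hY ij
        by (intro continuous_intros) auto
      moreover have "\<forall>z\<in>sphere 0 1. g z = 0"
      proof
        fix z :: complex assume z: "z \<in> sphere 0 1"
        have "z^k * g z = (\<Sum>p\<in>{1..n}. z^k * poly (poly_shift k (P i p)) z * X z p j) - z^k * z^(r-k) * Y z i j"
          by (simp add: g_def sum_distrib_left right_diff_distrib mult.assoc)
        also have "\<dots> = (\<Sum>p\<in>{1..n}. poly (P i p) z * X z p j) - z^r * Y z i j"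
          using poly_shift_split[OF lowz] ij less.prems
          by (simp add: power_add[symmetric])
        also have "\<dots> = 0" using eq z ij by simp
        finally have "z^k * g z = 0" .
        moreover have "z \<noteq> 0" using z by auto
        ultimately show "g z = 0" by simp
      qed
      ultimately have "g 0 = 0" by (rule zero_at_center)
      moreover have "g 0 = (\<Sum>p\<in>{1..n}. coeff (P i p) k * X 0 p j)"
        using less.prems by (simp add: g_def poly_0_coeff_0 coeff_poly_shift)
      ultimately show ?thesis by simp
    qed
    show ?case
    proof (intro ballI)
      fix i q assume iq: "i \<in> {1..n}" "q \<in> {1..n}"
      have "coeff (P i q) k = (\<Sum>p\<in>{1..n}. coeff (P i p) k * idm p q)"
        using iq sum_idm_right[where f="\<lambda>p. coeff (P i p) k" and n=n and j=q] by simp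
      also have "\<dots> = (\<Sum>p\<in>{1..n}. coeff (P i p) k * (\<Sum>j\<in>{1..n}. X 0 p j * C j q))"
        using inv iq by (intro sum.cong) (auto simp: meq_def mmul_def)
      also have "\<dots> = (\<Sum>j\<in>{1..n}. (\<Sum>p\<in>{1..n}. coeff (P i p) k * X 0 p j) * C j q)"
        by (simp add: sum_distrib_left sum_distrib_right mult.assoc) (rule sum.swap)
      also have "\<dots> = 0" using z0 iq by simp
      finally show "coeff (P i q) k = 0" .
    qed
  qed
  show ?thesis using main by blast
qed

definition mkpoly :: "nat \<Rightarrow> (nat \<Rightarrow> complex) \<Rightarrow> complex poly" where
  "mkpoly N a = (\<Sum>k\<le>N. monom (a k) k)"

definition cjpoly :: "nat \<Rightarrow> (nat \<Rightarrow> complex) \<Rightarrow> complex poly" where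
  "cjpoly N a = (\<Sum>k\<le>N. monom (cnj (a k)) (N - k))"

lemma poly_mkpoly: "poly (mkpoly N a) l = (\<Sum>k\<le>N. a k * l^k)"
  by (simp add: mkpoly_def poly_sum poly_monom)

lemma sphere_pow_cnj: "l \<in> sphere 0 1 \<Longrightarrow> l^k * cnj l ^ k = 1"
proof -
  assume "l \<in> sphere 0 1"
  then have "l * cnj l = 1" using complex_norm_square[of l] by simp
  then show ?thesis by (metis power_mult_distrib power_one)
qed

lemma poly_cjpoly:
  assumes "l \<in> sphere 0 1"
  shows "poly (cjpoly N a) l = l^N * cnj (\<Sum>k\<le>N. a k * l^k)"
proof -
  have "poly (cjpoly N a) l = (\<Sum>k\<le>N. cnj (a k) * l^(N-k))"
    by (simp add: cjpoly_def poly_sum poly_monom)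
  also have "\<dots> = (\<Sum>k\<le>N. l^N * (cnj (a k) * cnj l ^ k))"
  proof (rule sum.cong)
    fix k assume "k \<in> {..N}"
    then have "l^N = l^(N-k) * l^k" by (simp add: power_add[symmetric])
    then have "l^N * cnj l ^ k = l^(N-k)" using sphere_pow_cnj[OF assms, of k] by (simp add: mult.assoc)
    then show "cnj (a k) * l^(N-k) = l^N * (cnj (a k) * cnj l ^ k)" by (metis mult.left_commute)
  qed simp
  also have "\<dots> = l^N * cnj (\<Sum>k\<le>N. a k * l^k)"
    by (simp add: sum_distrib_left)
  finally show ?thesis .
qed

lemma coeff_cjpoly: "coeff (cjpoly N a) k = (if k \<le> N then cnj (a (N - k)) else 0)"
proof -
  have "coeff (cjpoly N a) k = (\<Sum>m\<le>N. if N - m = k then cnj (a m) else 0)"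
    by (simp add: cjpoly_def coeff_sum coeff_monom)
  also have "\<dots> = (if k \<le> N then cnj (a (N - k)) else 0)"
  proof (cases "k \<le> N")
    case True
    have "(\<Sum>m\<le>N. if N - m = k then cnj (a m) else 0) = (\<Sum>m\<le>N. if m = N - k then cnj (a m) else 0)"
      using True by (intro sum.cong) auto
    also have "\<dots> = cnj (a (N - k))" by simp
    finally show ?thesis using True by simp
  next
    case False
    then show ?thesis by (auto intro!: sum.neutral)
  qed
  finally show ?thesis .
qed

lemma degree_mkpoly: "degree (mkpoly N a) \<le> N"
  unfolding mkpoly_def by (intro degree_sum_le) (auto intro: order.trans[OF degree_monom_le])

lemma degree_cjpoly: "degree (cjpoly N a) \<le> N"
  unfolding cjpoly_def by (intro degree_sum_le) (auto intro: order.trans[OF degree_monom_le])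

lemma poly_upto:
  fixes p :: "complex poly"
  assumes "degree p \<le> N"
  shows "poly p l = (\<Sum>k\<le>N. coeff p k * l^k)"
proof -
  have "poly p l = (\<Sum>k\<le>degree p. coeff p k * l^k)" by (rule poly_altdef)
  also have "\<dots> = (\<Sum>k\<le>N. coeff p k * l^k)"
    using assms by (intro sum.mono_neutral_left) (auto simp: coeff_eq_0)
  finally show ?thesis .
qed

lemma infinite_sphere: "infinite (sphere (0::complex) 1)"
proof
  assume "finite (sphere (0::complex) 1)"
  moreover have "connected (sphere (0::complex) 1)" by (rule connected_sphere) auto
  ultimately have "sphere (0::complex) 1 = {} \<or> (\<exists>a. sphere (0::complex) 1 = {a})"
    using connected_finite_iff_sing by blast
  moreover have "1 \<in> sphere (0::complex) 1" "-1 \<in> sphere (0::complex) 1" by auto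
  ultimately show False by (metis empty_iff singletonD one_neq_neg_one)
qed

lemma poly_eq_on_sphere:
  fixes p q :: "complex poly"
  assumes "\<forall>l\<in>sphere 0 1. poly p l = poly q l"
  shows "p = q"
proof (rule ccontr)
  assume "p \<noteq> q"
  then have "finite {x. poly (p - q) x = 0}" by (intro poly_roots_finite) simp
  moreover have "sphere 0 1 \<subseteq> {x. poly (p - q) x = 0}" using assms by auto
  ultimately show False using infinite_sphere finite_subset by blast
qed



lemma loop_rigidity:
  fixes Phi X Y :: "complex \<Rightarrow> cmat" and Ck :: "nat \<Rightarrow> cmat" and C1 C2 :: cmat
  assumes pol: "\<forall>l\<in>sphere 0 1. \<forall>i\<in>{1..n}. \<forall>j\<in>{1..n}. Phi l i j = (\<Sum>k\<le>r. l^k * Ck k i j)"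
    and uni: "\<forall>l\<in>sphere 0 1. \<forall>i\<in>{1..n}. \<forall>j\<in>{1..n}. (\<Sum>q\<in>{1..n}. cnj (Phi l q i) * Phi l q j) = idm i j"
    and based: "\<forall>i\<in>{1..n}. \<forall>j\<in>{1..n}. Phi 1 i j = idm i j"
    and mu: "\<mu> \<in> sphere 0 1"
    and hX: "\<forall>i\<in>{1..n}. \<forall>j\<in>{1..n}. (\<lambda>l. X l i j) holomorphic_on ball 0 1 \<and> continuous_on (cball 0 1) (\<lambda>l. X l i j)"
    and hY: "\<forall>i\<in>{1..n}. \<forall>j\<in>{1..n}. (\<lambda>l. Y l i j) holomorphic_on ball 0 1 \<and> continuous_on (cball 0 1) (\<lambda>l. Y l i j)"
    and invX: "meq n (mmul n (X 0) C1) idm"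
    and invY: "meq n (mmul n (Y 0) C2) idm"
    and eq: "\<forall>l\<in>sphere 0 1. \<forall>i\<in>{1..n}. \<forall>j\<in>{1..n}.
               (\<Sum>q\<in>{1..n}. Phi (l*\<mu>) i q * X l q j) = (\<Sum>q\<in>{1..n}. Phi l i q * Y l q j)"
  shows "\<forall>l\<in>sphere 0 1. \<forall>i\<in>{1..n}. \<forall>p\<in>{1..n}. (\<Sum>q\<in>{1..n}. cnj (Phi l q i) * Phi (l*\<mu>) q p) = Phi \<mu> i p"
proof -
  define a where "a q p k = Ck k q p" for q p k
  define am where "am q p k = \<mu>^k * Ck k q p" for q p k
  define R1 where "R1 i p = (\<Sum>q\<in>{1..n}. cjpoly r (a q i) * mkpoly r (am q p))" for i p
  define R2 where "R2 i p = (\<Sum>q\<in>{1..n}. cjpoly r (am q i) * mkpoly r (a q p))" for i p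
  define U where "U l i p = (\<Sum>q\<in>{1..n}. cnj (Phi l q i) * Phi (l*\<mu>) q p)" for l i p
  define U' where "U' l i p = (\<Sum>q\<in>{1..n}. cnj (Phi (l*\<mu>) q i) * Phi l q p)" for l i p
  have lmu: "l * \<mu> \<in> sphere 0 1" if "l \<in> sphere 0 1" for l
    using that mu by (simp add: norm_mult)
  have Pa: "Phi l q p = (\<Sum>k\<le>r. a q p k * l^k)" if "l \<in> sphere 0 1" "q\<in>{1..n}" "p\<in>{1..n}" for l q p
    using pol that by (simp add: a_def mult.commute)
  have Pam: "Phi (l*\<mu>) q p = (\<Sum>k\<le>r. am q p k * l^k)" if "l \<in> sphere 0 1" "q\<in>{1..n}" "p\<in>{1..n}" for l q p
    using pol lmu[OF that(1)] that by (simp add: am_def power_mult_distrib mult_ac)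
  have pR1: "poly (R1 i p) l = l^r * U l i p" if "l \<in> sphere 0 1" "i\<in>{1..n}" "p\<in>{1..n}" for l i p
  proof -
    have "poly (R1 i p) l = (\<Sum>q\<in>{1..n}. (l^r * cnj (Phi l q i) * Phi (l*\<mu>) q p))"
      unfolding R1_def poly_sum poly_mult using that
      by (intro sum.cong) (simp_all add: poly_cjpoly poly_mkpoly Pa Pam)
    then show ?thesis by (simp add: U_def sum_distrib_left mult.assoc)
  qed
  have pR2: "poly (R2 i p) l = l^r * U' l i p" if "l \<in> sphere 0 1" "i\<in>{1..n}" "p\<in>{1..n}" for l i p
  proof -
    have "poly (R2 i p) l = (\<Sum>q\<in>{1..n}. (l^r * cnj (Phi (l*\<mu>) q i) * Phi l q p))"
      unfolding R2_def poly_sum poly_mult using that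
      by (intro sum.cong) (simp_all add: poly_cjpoly poly_mkpoly Pa Pam)
    then show ?thesis by (simp add: U'_def sum_distrib_left mult.assoc)
  qed
  have eq1: "\<forall>l\<in>sphere 0 1. \<forall>i\<in>{1..n}. \<forall>j\<in>{1..n}. (\<Sum>p\<in>{1..n}. poly (R1 i p) l * X l p j) = l^r * Y l i j"
  proof (intro ballI)
    fix l :: complex and i j assume l: "l \<in> sphere 0 1" and ij: "i\<in>{1..n}" "j\<in>{1..n}"
    have "(\<Sum>p\<in>{1..n}. poly (R1 i p) l * X l p j) = l^r * (\<Sum>p\<in>{1..n}. U l i p * X l p j)"
      using l ij by (simp add: pR1 sum_distrib_left mult.assoc)
    also have "(\<Sum>p\<in>{1..n}. U l i p * X l p j) = (\<Sum>q\<in>{1..n}. cnj (Phi l q i) * (\<Sum>p\<in>{1..n}. Phi (l*\<mu>) q p * X l p j))"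
      unfolding U_def by (rule sum_assoc3)
    also have "\<dots> = (\<Sum>q\<in>{1..n}. cnj (Phi l q i) * (\<Sum>s\<in>{1..n}. Phi l q s * Y l s j))"
      using eq l ij by (intro sum.cong) auto
    also have "\<dots> = (\<Sum>s\<in>{1..n}. (\<Sum>q\<in>{1..n}. cnj (Phi l q i) * Phi l q s) * Y l s j)"
      by (rule sum_assoc3[symmetric])
    also have "\<dots> = (\<Sum>s\<in>{1..n}. idm i s * Y l s j)"
      using uni l ij by (intro sum.cong) auto
    also have "\<dots> = Y l i j" using ij sum_idm_left[where i=i and n=n and f="\<lambda>s. Y l s j"] by simp
    finally show "(\<Sum>p\<in>{1..n}. poly (R1 i p) l * X l p j) = l^r * Y l i j" .
  qed
  have eq2: "\<forall>l\<in>sphere 0 1. \<forall>i\<in>{1..n}. \<forall>j\<in>{1..n}. (\<Sum>p\<in>{1..n}. poly (R2 i p) l * Y l p j) = l^r * X l i j"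
  proof (intro ballI)
    fix l :: complex and i j assume l: "l \<in> sphere 0 1" and ij: "i\<in>{1..n}" "j\<in>{1..n}"
    have "(\<Sum>p\<in>{1..n}. poly (R2 i p) l * Y l p j) = l^r * (\<Sum>p\<in>{1..n}. U' l i p * Y l p j)"
      using l ij by (simp add: pR2 sum_distrib_left mult.assoc)
    also have "(\<Sum>p\<in>{1..n}. U' l i p * Y l p j) = (\<Sum>q\<in>{1..n}. cnj (Phi (l*\<mu>) q i) * (\<Sum>p\<in>{1..n}. Phi l q p * Y l p j))"
      unfolding U'_def by (rule sum_assoc3)
    also have "\<dots> = (\<Sum>q\<in>{1..n}. cnj (Phi (l*\<mu>) q i) * (\<Sum>s\<in>{1..n}. Phi (l*\<mu>) q s * X l s j))"
      using eq l ij by (intro sum.cong) auto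
    also have "\<dots> = (\<Sum>s\<in>{1..n}. (\<Sum>q\<in>{1..n}. cnj (Phi (l*\<mu>) q i) * Phi (l*\<mu>) q s) * X l s j)"
      by (rule sum_assoc3[symmetric])
    also have "\<dots> = (\<Sum>s\<in>{1..n}. idm i s * X l s j)"
      using uni lmu[OF l] ij by (intro sum.cong) auto
    also have "\<dots> = X l i j" using ij sum_idm_left[where i=i and n=n and f="\<lambda>s. X l s j"] by simp
    finally show "(\<Sum>p\<in>{1..n}. poly (R2 i p) l * Y l p j) = l^r * X l i j" .
  qed
  have low1: "\<forall>k<r. \<forall>i\<in>{1..n}. \<forall>p\<in>{1..n}. coeff (R1 i p) k = 0"
    by (rule low_coeffs_vanish[OF hX hY invX eq1])
  have low2: "\<forall>k<r. \<forall>i\<in>{1..n}. \<forall>p\<in>{1..n}. coeff (R2 i p) k = 0"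
    by (rule low_coeffs_vanish[OF hY hX invY eq2])
  have degR1: "degree (R1 i p) \<le> 2*r" for i p
    unfolding R1_def
    using degree_cjpoly[of r] degree_mkpoly[of r]
    by (intro degree_sum_le) (auto intro!: order.trans[OF degree_mult_le] simp: mult_2 add_mono)
  have R2eq: "R2 p i = cjpoly (2*r) (coeff (R1 i p))" if ip: "i\<in>{1..n}" "p\<in>{1..n}" for i p
  proof (rule poly_eq_on_sphere, intro ballI)
    fix l :: complex assume l: "l \<in> sphere 0 1"
    have U'U: "U' l p i = cnj (U l i p)"
      unfolding U_def U'_def by (simp add: mult.commute)
    have "poly (cjpoly (2*r) (coeff (R1 i p))) l = l^(2*r) * cnj (poly (R1 i p) l)"
      using l by (simp add: poly_cjpoly poly_upto[OF degR1])
    also have "\<dots> = (l^r * cnj l ^ r) * l^r * cnj (U l i p)"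
      using l ip by (simp add: pR1 power_add[symmetric] mult_2_right mult_ac)
    also have "\<dots> = l^r * U' l p i" using sphere_pow_cnj[OF l, of r] U'U by simp
    also have "\<dots> = poly (R2 p i) l" using pR2 l ip by simp
    finally show "poly (R2 p i) l = poly (cjpoly (2*r) (coeff (R1 i p))) l" by simp
  qed
  have high1: "coeff (R1 i p) m = 0" if ip: "i\<in>{1..n}" "p\<in>{1..n}" and m: "m \<noteq> r" for i p m
  proof (cases "m < r")
    case True then show ?thesis using low1 ip by auto
  next
    case False
    show ?thesis
    proof (cases "m \<le> 2*r")
      case True
      have "2*r - m < r" using \<open>\<not> m < r\<close> m True by arith
      then have "coeff (R2 p i) (2*r - m) = 0" using low2 ip by auto
      then show ?thesis using R2eq[OF ip] True by (simp add: coeff_cjpoly)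
    next
      case False
      then show ?thesis using degR1[of i p] by (simp add: coeff_eq_0)
    qed
  qed
  have Uconst: "U l i p = coeff (R1 i p) r" if l: "l \<in> sphere 0 1" and ip: "i\<in>{1..n}" "p\<in>{1..n}" for l i p
  proof -
    have "l^r * U l i p = poly (R1 i p) l" using pR1 l ip by simp
    also have "\<dots> = (\<Sum>k\<le>2*r. coeff (R1 i p) k * l^k)" by (rule poly_upto[OF degR1])
    also have "\<dots> = (\<Sum>k\<le>2*r. if k = r then coeff (R1 i p) r * l^r else 0)"
      using high1[OF ip] by (intro sum.cong) auto
    also have "\<dots> = l^r * coeff (R1 i p) r" by simp
    finally show ?thesis using l by (auto simp: power_eq_0_iff)
  qed
  show ?thesis
  proof (intro ballI)
    fix l :: complex and i p assume l: "l \<in> sphere 0 1" and ip: "i\<in>{1..n}" "p\<in>{1..n}"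
    have one: "(1::complex) \<in> sphere 0 1" by simp
    have "U 1 i p = (\<Sum>q\<in>{1..n}. idm q i * Phi \<mu> q p)"
      unfolding U_def using based ip by (intro sum.cong) (auto simp: idm_def)
    also have "\<dots> = Phi \<mu> i p" using ip sum_idm_right[where f="\<lambda>q. Phi \<mu> q p" and n=n and j=i] by (simp add: mult.commute)
    finally have "U 1 i p = Phi \<mu> i p" .
    then show "(\<Sum>q\<in>{1..n}. cnj (Phi l q i) * Phi (l*\<mu>) q p) = Phi \<mu> i p"
      using Uconst[OF l ip] Uconst[OF one ip] unfolding U_def by simp
  qed
qed



lemma inv_unique:
  assumes "meq n (mmul n A B) idm" "meq n (mmul n B D) idm"
  shows "meq n A D"
  unfolding meq_def
proof (intro ballI)
  fix i j assume ij: "i \<in> {1..n}" "j \<in> {1..n}"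
  have "A i j = (\<Sum>k\<in>{1..n}. A i k * idm k j)"
    using ij sum_idm_right[where f="\<lambda>k. A i k" and n=n and j=j] by simp
  also have "\<dots> = (\<Sum>k\<in>{1..n}. A i k * (\<Sum>s\<in>{1..n}. B k s * D s j))"
    using assms(2) ij by (intro sum.cong) (auto simp: meq_def mmul_def)
  also have "\<dots> = (\<Sum>s\<in>{1..n}. (\<Sum>k\<in>{1..n}. A i k * B k s) * D s j)"
    by (rule sum_assoc3[symmetric])
  also have "\<dots> = (\<Sum>s\<in>{1..n}. idm i s * D s j)"
    using assms(1) ij by (intro sum.cong) (auto simp: meq_def mmul_def)
  also have "\<dots> = D i j" using ij sum_idm_left[where f="\<lambda>s. D s j" and n=n and i=i] by simp
  finally show "A i j = D i j" .
qed

lemma mmul_gamma: "j \<in> {1..n} \<Longrightarrow> mmul n A (gamma_xi xi l) i j = A i j * l ^ nat (xi j)"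
proof -
  assume j: "j \<in> {1..n}"
  have "mmul n A (gamma_xi xi l) i j = (\<Sum>k\<in>{1..n}. if k = j then A i j * l ^ nat (xi j) else 0)"
    unfolding mmul_def gamma_xi_def by (intro sum.cong) auto
  also have "\<dots> = A i j * l ^ nat (xi j)" using j by simp
  finally show ?thesis .
qed

lemma xi_cases:
  assumes "canonical_xi n r xi" "1 \<le> n" "n \<le> 4"
  shows "(n = 1 \<and> r = 0 \<and> xi 1 = 0)
       \<or> (n = 2 \<and> r = 0 \<and> xi 1 = 0 \<and> xi 2 = 0)
       \<or> (n = 2 \<and> r = 1 \<and> xi 1 = 1 \<and> xi 2 = 0)
       \<or> (n = 3 \<and> r = 0 \<and> xi 1 = 0 \<and> xi 2 = 0 \<and> xi 3 = 0)
       \<or> (n = 3 \<and> r = 2 \<and> xi 1 = 2 \<and> xi 2 = 1 \<and> xi 3 = 0)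
       \<or> (n = 4 \<and> r = 0 \<and> xi 1 = 0 \<and> xi 2 = 0 \<and> xi 3 = 0 \<and> xi 4 = 0)
       \<or> (n = 4 \<and> r = 1 \<and> xi 1 = 1 \<and> xi 2 = 1 \<and> xi 3 = 0 \<and> xi 4 = 0)
       \<or> (n = 4 \<and> r = 2 \<and> xi 1 = 2 \<and> xi 2 = 1 \<and> xi 3 = 1 \<and> xi 4 = 0)"
proof -
  have d: "\<forall>i\<in>{1..<n}. xi i - xi (i + 1) \<in> {0, 1}" and x1: "xi 1 = int r" and xn: "xi n = 0"
    and sym: "\<forall>i\<in>{1..n}. xi (n + 1 - i) = int r - xi i"
    and od: "odd r \<longrightarrow> 1 \<le> n div 2 - 1 \<longrightarrow> xi (n div 2 - 1) = xi (n div 2)"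
    using assms(1) unfolding canonical_xi_def by auto
  have "n = 1 \<or> n = 2 \<or> n = 3 \<or> n = 4" using assms by auto
  then show ?thesis
  proof (elim disjE)
    assume n: "n = 1"
    then show ?thesis using x1 xn by simp
  next
    assume n: "n = 2"
    have "xi 1 - xi 2 \<in> {0,1}" using bspec[OF d, of 1] n by (simp add: eval_nat_numeral)
    then show ?thesis using x1 xn n by auto
  next
    assume n: "n = 3"
    have "xi 1 - xi 2 \<in> {0,1}" "xi 2 - xi 3 \<in> {0,1}" using bspec[OF d, of 1] bspec[OF d, of 2] n by (simp_all add: eval_nat_numeral)
    moreover have "xi 2 = int r - xi 2" using bspec[OF sym, of 2] n by (simp add: eval_nat_numeral)
    ultimately show ?thesis using x1 xn n by auto
  next
    assume n: "n = 4"
    have "xi 1 - xi 2 \<in> {0,1}" "xi 2 - xi 3 \<in> {0,1}" "xi 3 - xi 4 \<in> {0,1}"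
      using bspec[OF d, of 1] bspec[OF d, of 2] bspec[OF d, of 3] n by (simp_all add: eval_nat_numeral)
    moreover have "xi 3 = int r - xi 2" using bspec[OF sym, of 2] n by (simp add: eval_nat_numeral)
    moreover have "odd r \<longrightarrow> xi 1 = xi 2" using od n by simp
    ultimately have f: "0 \<le> xi 1 - xi 2" "xi 1 - xi 2 \<le> 1" "0 \<le> xi 2 - xi 3" "xi 2 - xi 3 \<le> 1"
      "0 \<le> xi 3 - xi 4" "xi 3 - xi 4 \<le> 1" "xi 3 = int r - xi 2" "odd r \<longrightarrow> xi 1 = xi 2" by auto
    then have "r \<le> 3" using x1 xn n by linarith
    then have "r = 0 \<or> r = 1 \<or> r = 2 \<or> r = 3" by auto
    then show ?thesis
    proof (elim disjE)
      assume "r = 3" then show ?thesis using f x1 xn n by simp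
    qed (use f x1 xn n in auto)
  qed
qed

lemma Aconst_easy:
  assumes "nat (xi i - xi j) \<le> 1"
  shows "Amat xi c z l i j = Amat xi c z 0 i j"
proof (cases "xi i \<le> xi j")
  case True then show ?thesis by (simp add: Amat_def)
next
  case False
  then have "nat (xi i - xi j) = 1" using assms by linarith
  then show ?thesis using False by (simp add: Amat_def)
qed

lemma set3: "{1..3::nat} = {1,2,3}" by auto
lemma set4: "{1..4::nat} = {1,2,3,4}" by auto

lemma xi_diff:
  assumes xi: "canonical_xi n r xi" "1 \<le> n" "n \<le> 4"
    and ij: "i\<in>{1..n}" "j\<in>{1..n}"
  shows "nat (xi i - xi j) \<le> 1 \<or> (n = 3 \<and> xi 1 = 2 \<and> xi 2 = 1 \<and> xi 3 = 0 \<and> i = 1 \<and> j = 3)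
     \<or> (n = 4 \<and> xi 1 = 2 \<and> xi 2 = 1 \<and> xi 3 = 1 \<and> xi 4 = 0 \<and> i = 1 \<and> j = 4)"
proof -
  have "i \<le> 4" "j \<le> 4" "1 \<le> i" "1 \<le> j" using ij xi by auto
  then have ii: "i = 1 \<or> i = 2 \<or> i = 3 \<or> i = 4" and jj: "j = 1 \<or> j = 2 \<or> j = 3 \<or> j = 4" by auto
  show ?thesis using xi_cases[OF xi]
  proof (elim disjE)
  qed (use ii jj ij in auto)
qed

lemma Aconst:
  assumes xi: "canonical_xi n r xi" "1 \<le> n" "n \<le> 4"
    and orth: "\<forall>l. meq n (mmul n (btr n (Amat xi c z l)) (Amat xi c z l)) idm"
    and ij: "i\<in>{1..n}" "j\<in>{1..n}"
  shows "Amat xi c z l i j = Amat xi c z 0 i j"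
proof -
  have o: "(\<Sum>k\<in>{1..n}. Amat xi c z l (n + 1 - k) n * Amat xi c z l k n) = 0" if n1: "n \<noteq> 1" for l
  proof -
    have "meq n (mmul n (btr n (Amat xi c z l)) (Amat xi c z l)) idm" using orth by blast
    then have "mmul n (btr n (Amat xi c z l)) (Amat xi c z l) 1 n = idm 1 n" unfolding meq_def using xi by auto
    then show ?thesis using n1 by (simp add: mmul_def btr_def idm_def)
  qed
  show ?thesis using xi_diff[OF xi ij]
  proof (elim disjE)
    assume "nat (xi i - xi j) \<le> 1" then show ?thesis by (rule Aconst_easy)
  next
    assume h: "n = 3 \<and> xi 1 = 2 \<and> xi 2 = 1 \<and> xi 3 = 0 \<and> i = 1 \<and> j = 3"
    have A33: "Amat xi c z l 3 3 = 1" for l by (simp add: Amat_def idm_def)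
    have A23: "Amat xi c z l 2 3 = c 2 3 0 z" for l using h by (simp add: Amat_def)
    have A13: "Amat xi c z l 1 3 = c 1 3 0 z + c 1 3 1 z * l" for l
      using h by (simp add: Amat_def eval_nat_numeral)
    have n1: "n \<noteq> 1" and n3: "n = 3" using h by auto
    have e: "2 * (c 1 3 0 z + c 1 3 1 z * l) + c 2 3 0 z * c 2 3 0 z = 0" for l
      using o[OF n1, of l, unfolded n3 set3] h by (simp add: Amat_def idm_def eval_nat_numeral algebra_simps)
    have e0: "2 * c 1 3 0 z + c 2 3 0 z * c 2 3 0 z = 0" using e[of 0] by simp
    have e1: "2 * (c 1 3 0 z + c 1 3 1 z) + c 2 3 0 z * c 2 3 0 z = 0" using e[of 1] by simp
    have "2 * c 1 3 1 z = (2 * (c 1 3 0 z + c 1 3 1 z) + c 2 3 0 z * c 2 3 0 z) - (2 * c 1 3 0 z + c 2 3 0 z * c 2 3 0 z)"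
      by (simp add: algebra_simps)
    also have "\<dots> = 0" unfolding e0 e1 by simp
    finally have "c 1 3 1 z = 0" by simp
    then show ?thesis using h A13 by simp
  next
    assume h: "n = 4 \<and> xi 1 = 2 \<and> xi 2 = 1 \<and> xi 3 = 1 \<and> xi 4 = 0 \<and> i = 1 \<and> j = 4"
    have A44: "Amat xi c z l 4 4 = 1" for l by (simp add: Amat_def idm_def)
    have A34: "Amat xi c z l 3 4 = c 3 4 0 z" for l using h by (simp add: Amat_def)
    have A24: "Amat xi c z l 2 4 = c 2 4 0 z" for l using h by (simp add: Amat_def)
    have A14: "Amat xi c z l 1 4 = c 1 4 0 z + c 1 4 1 z * l" for l
      using h by (simp add: Amat_def eval_nat_numeral)
    have n1: "n \<noteq> 1" and n4: "n = 4" using h by auto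
    have e: "2 * (c 1 4 0 z + c 1 4 1 z * l) + 2 * (c 3 4 0 z * c 2 4 0 z) = 0" for l
      using o[OF n1, of l, unfolded n4 set4] h by (simp add: Amat_def idm_def eval_nat_numeral algebra_simps)
    have e0: "2 * c 1 4 0 z + 2 * (c 3 4 0 z * c 2 4 0 z) = 0" using e[of 0] by simp
    have e1: "2 * (c 1 4 0 z + c 1 4 1 z) + 2 * (c 3 4 0 z * c 2 4 0 z) = 0" using e[of 1] by simp
    have "2 * c 1 4 1 z = (2 * (c 1 4 0 z + c 1 4 1 z) + 2 * (c 3 4 0 z * c 2 4 0 z)) - (2 * c 1 4 0 z + 2 * (c 3 4 0 z * c 2 4 0 z))"
      by (simp add: algebra_simps)
    also have "\<dots> = 0" unfolding e0 e1 by simp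
    finally have "c 1 4 1 z = 0" by simp
    then show ?thesis using h A14 by simp
  qed
qed



lemma good_S1:
  fixes Phi :: "complex \<Rightarrow> cmat"
  assumes xi: "canonical_xi n r xi" "1 \<le> n" "n \<le> 4"
    and om: "in_OmegaR n r Phi"
    and orth: "\<forall>l. meq n (mmul n (btr n (Amat xi c z l)) (Amat xi c z l)) idm"
    and buf: "based_unitary_factor n Phi (\<lambda>l. mmul n (Amat xi c z l) (gamma_xi xi l))"
  shows "\<forall>l\<in>sphere 0 1. \<forall>m\<in>sphere 0 1. meq n (Phi (l*m)) (mmul n (Phi l) (Phi m))"
proof -
  obtain Ck :: "nat \<Rightarrow> cmat" where polm: "\<forall>l\<in>sphere 0 1. meq n (Phi l) (\<lambda>i j. \<Sum>k\<le>r. l ^ k * Ck k i j)"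
    and unim: "\<forall>l\<in>sphere 0 1. unitary_mat n (Phi l)" and basedm: "meq n (Phi 1) idm"
    using om unfolding in_OmegaR_def by blast
  have pol: "\<forall>l\<in>sphere 0 1. \<forall>i\<in>{1..n}. \<forall>j\<in>{1..n}. Phi l i j = (\<Sum>k\<le>r. l^k * Ck k i j)"
    using polm unfolding meq_def by blast
  have uni: "\<forall>l\<in>sphere 0 1. \<forall>i\<in>{1..n}. \<forall>j\<in>{1..n}. (\<Sum>q\<in>{1..n}. cnj (Phi l q i) * Phi l q j) = idm i j"
    using unim unfolding unitary_mat_def meq_def mmul_def ctr_def by blast
  have based: "\<forall>i\<in>{1..n}. \<forall>j\<in>{1..n}. Phi 1 i j = idm i j"
    using basedm unfolding meq_def by blast
  obtain B :: "complex \<Rightarrow> cmat" where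
    hB: "\<forall>i\<in>{1..n}. \<forall>j\<in>{1..n}. (\<lambda>l. B l i j) holomorphic_on ball 0 1 \<and> continuous_on (cball 0 1) (\<lambda>l. B l i j)"
    and invB: "\<forall>l\<in>cball 0 1. \<exists>C. meq n (mmul n (B l) C) idm"
    and fac: "\<forall>l\<in>sphere 0 1. meq n (mmul n (Amat xi c z l) (gamma_xi xi l)) (mmul n (Phi l) (B l))"
    using buf unfolding based_unitary_factor_def by blast
  obtain C0 where C0: "meq n (mmul n (B 0) C0) idm" using invB by fastforce
  define A where "A = Amat xi c z"
  have Ac: "A l i j = A 0 i j" if "i\<in>{1..n}" "j\<in>{1..n}" for l i j
    unfolding A_def by (rule Aconst[OF xi orth that])
  have facE: "(\<Sum>q\<in>{1..n}. Phi l i q * B l q j) = A 0 i j * l ^ nat (xi j)"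
    if "l \<in> sphere 0 1" "i\<in>{1..n}" "j\<in>{1..n}" for l i j
  proof -
    have "(\<Sum>q\<in>{1..n}. Phi l i q * B l q j) = mmul n (Phi l) (B l) i j" by (simp add: mmul_def)
    also have "\<dots> = mmul n (A l) (gamma_xi xi l) i j"
      using fac that unfolding meq_def A_def by auto
    also have "\<dots> = A l i j * l ^ nat (xi j)" using that by (simp add: mmul_gamma)
    also have "\<dots> = A 0 i j * l ^ nat (xi j)" using Ac[of i j l] that by simp
    finally show ?thesis .
  qed
  have R: "\<forall>l\<in>sphere 0 1. \<forall>i\<in>{1..n}. \<forall>p\<in>{1..n}. (\<Sum>q\<in>{1..n}. cnj (Phi l q i) * Phi (l*\<mu>) q p) = Phi \<mu> i p"
    if mu: "\<mu> \<in> sphere 0 1" for \<mu>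
  proof (rule loop_rigidity[OF pol uni based mu])
    show "\<forall>i\<in>{1..n}. \<forall>j\<in>{1..n}. (\<lambda>l. B (l*\<mu>) i j) holomorphic_on ball 0 1 \<and> continuous_on (cball 0 1) (\<lambda>l. B (l*\<mu>) i j)"
    proof (intro ballI conjI)
      fix i j assume ij: "i\<in>{1..n}" "j\<in>{1..n}"
      have im1: "(\<lambda>l. l*\<mu>) ` ball 0 1 \<subseteq> ball 0 1" using mu by (auto simp: norm_mult)
      have im2: "(\<lambda>l. l*\<mu>) ` cball 0 1 \<subseteq> cball 0 1" using mu by (auto simp: norm_mult)
      have "((\<lambda>l. B l i j) \<circ> (\<lambda>l. l*\<mu>)) holomorphic_on ball 0 1"
        by (rule holomorphic_on_compose_gen[OF _ _ im1]) (use hB ij in \<open>auto intro!: holomorphic_intros\<close>)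
      then show "(\<lambda>l. B (l*\<mu>) i j) holomorphic_on ball 0 1" by (simp add: o_def)
      show "continuous_on (cball 0 1) (\<lambda>l. B (l*\<mu>) i j)"
        by (rule continuous_on_compose2[OF _ _ im2]) (use hB ij in \<open>auto intro!: continuous_intros\<close>)
    qed
  next
    show "\<forall>i\<in>{1..n}. \<forall>j\<in>{1..n}. (\<lambda>l. mmul n (B l) (gamma_xi xi \<mu>) i j) holomorphic_on ball 0 1 \<and>
            continuous_on (cball 0 1) (\<lambda>l. mmul n (B l) (gamma_xi xi \<mu>) i j)"
    proof (intro ballI)
      fix i j assume ij: "i\<in>{1..n}" "j\<in>{1..n}"
      have e: "(\<lambda>l. mmul n (B l) (gamma_xi xi \<mu>) i j) = (\<lambda>l. B l i j * \<mu> ^ nat (xi j))"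
        using ij by (simp add: mmul_gamma)
      show "(\<lambda>l. mmul n (B l) (gamma_xi xi \<mu>) i j) holomorphic_on ball 0 1 \<and>
            continuous_on (cball 0 1) (\<lambda>l. mmul n (B l) (gamma_xi xi \<mu>) i j)"
        unfolding e using hB ij by (auto intro!: holomorphic_intros continuous_intros)
    qed
  next
    show "meq n (mmul n (B (0*\<mu>)) C0) idm" using C0 by simp
  next
    show "meq n (mmul n (mmul n (B 0) (gamma_xi xi \<mu>)) (\<lambda>i j. cnj \<mu> ^ nat (xi i) * C0 i j)) idm"
      unfolding meq_def
    proof (intro ballI)
      fix i j assume ij: "i\<in>{1..n}" "j\<in>{1..n}"
      have "mmul n (mmul n (B 0) (gamma_xi xi \<mu>)) (\<lambda>i j. cnj \<mu> ^ nat (xi i) * C0 i j) i j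
           = (\<Sum>k\<in>{1..n}. B 0 i k * C0 k j)"
        unfolding mmul_def[of n "mmul n (B 0) (gamma_xi xi \<mu>)"]
      proof (intro sum.cong refl)
        fix k assume k: "k \<in> {1..n}"
        have "mmul n (B 0) (gamma_xi xi \<mu>) i k * (cnj \<mu> ^ nat (xi k) * C0 k j)
              = B 0 i k * (\<mu> ^ nat (xi k) * cnj \<mu> ^ nat (xi k)) * C0 k j"
          using k by (simp add: mmul_gamma mult_ac)
        also have "\<dots> = B 0 i k * C0 k j" using sphere_pow_cnj[OF mu] by simp
        finally show "mmul n (B 0) (gamma_xi xi \<mu>) i k * (cnj \<mu> ^ nat (xi k) * C0 k j) = B 0 i k * C0 k j" .
      qed
      also have "\<dots> = idm i j" using C0 ij unfolding meq_def mmul_def by blast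
      finally show "mmul n (mmul n (B 0) (gamma_xi xi \<mu>)) (\<lambda>i j. cnj \<mu> ^ nat (xi i) * C0 i j) i j = idm i j" .
    qed
  next
    show "\<forall>l\<in>sphere 0 1. \<forall>i\<in>{1..n}. \<forall>j\<in>{1..n}.
            (\<Sum>q\<in>{1..n}. Phi (l*\<mu>) i q * B (l*\<mu>) q j) = (\<Sum>q\<in>{1..n}. Phi l i q * mmul n (B l) (gamma_xi xi \<mu>) q j)"
    proof (intro ballI)
      fix l i j assume l: "l \<in> sphere (0::complex) 1" and ij: "i\<in>{1..n}" "j\<in>{1..n}"
      have lmu: "l * \<mu> \<in> sphere 0 1" using l mu by (simp add: norm_mult)
      have "(\<Sum>q\<in>{1..n}. Phi (l*\<mu>) i q * B (l*\<mu>) q j) = A 0 i j * (l*\<mu>) ^ nat (xi j)"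
        by (rule facE[OF lmu ij])
      also have "\<dots> = (A 0 i j * l ^ nat (xi j)) * \<mu> ^ nat (xi j)" by (simp add: power_mult_distrib mult_ac)
      also have "\<dots> = (\<Sum>q\<in>{1..n}. Phi l i q * B l q j) * \<mu> ^ nat (xi j)" using facE[OF l ij] by simp
      also have "\<dots> = (\<Sum>q\<in>{1..n}. Phi l i q * mmul n (B l) (gamma_xi xi \<mu>) q j)"
        using ij by (simp add: mmul_gamma sum_distrib_right sum_distrib_left mult_ac)
      finally show "(\<Sum>q\<in>{1..n}. Phi (l*\<mu>) i q * B (l*\<mu>) q j) = (\<Sum>q\<in>{1..n}. Phi l i q * mmul n (B l) (gamma_xi xi \<mu>) q j)" .
    qed
  qed
  have adj: "Phi (cnj l) i p = cnj (Phi l p i)" if l: "l \<in> sphere 0 1" and ip: "i\<in>{1..n}" "p\<in>{1..n}" for l i p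
  proof -
    have cl: "cnj l \<in> sphere 0 1" using l by simp
    have l1: "l * cnj l = 1" using sphere_pow_cnj[OF l, of 1] by simp
    have "Phi (cnj l) i p = (\<Sum>q\<in>{1..n}. cnj (Phi l q i) * Phi (l * cnj l) q p)"
      using R[OF cl] l ip by simp
    also have "\<dots> = (\<Sum>q\<in>{1..n}. cnj (Phi l q i) * idm q p)"
      unfolding l1 using based ip by (intro sum.cong) auto
    also have "\<dots> = cnj (Phi l p i)" using ip sum_idm_right[where f="\<lambda>q. cnj (Phi l q i)" and n=n and j=p] by simp
    finally show ?thesis .
  qed
  have uni2: "(\<Sum>q\<in>{1..n}. Phi l i q * cnj (Phi l j q)) = idm i j" if l: "l \<in> sphere 0 1" and ij: "i\<in>{1..n}" "j\<in>{1..n}" for l i j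
  proof -
    have cl: "cnj l \<in> sphere 0 1" using l by simp
    have "(\<Sum>q\<in>{1..n}. Phi l i q * cnj (Phi l j q)) = (\<Sum>q\<in>{1..n}. cnj (Phi (cnj l) q i) * Phi (cnj l) q j)"
      using ij l by (intro sum.cong) (auto simp: adj)
    also have "\<dots> = idm i j" using uni cl ij by blast
    finally show ?thesis .
  qed
  show ?thesis
  proof (intro ballI)
    fix l m assume l: "l \<in> sphere (0::complex) 1" and m: "m \<in> sphere (0::complex) 1"
    show "meq n (Phi (l*m)) (mmul n (Phi l) (Phi m))"
      unfolding meq_def
    proof (intro ballI)
      fix i p assume ip: "i\<in>{1..n}" "p\<in>{1..n}"
      have "mmul n (Phi l) (Phi m) i p = (\<Sum>q\<in>{1..n}. Phi l i q * (\<Sum>s\<in>{1..n}. cnj (Phi l s q) * Phi (l*m) s p))"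
        unfolding mmul_def using R[OF m] l ip by (intro sum.cong) auto
      also have "\<dots> = (\<Sum>s\<in>{1..n}. (\<Sum>q\<in>{1..n}. Phi l i q * cnj (Phi l s q)) * Phi (l*m) s p)"
        by (rule sum_assoc3[symmetric])
      also have "\<dots> = (\<Sum>s\<in>{1..n}. idm i s * Phi (l*m) s p)"
        using uni2 l ip by (intro sum.cong) auto
      also have "\<dots> = Phi (l*m) i p" using ip sum_idm_left[where f="\<lambda>s. Phi (l*m) s p" and n=n and i=i] by simp
      finally show "Phi (l*m) i p = mmul n (Phi l) (Phi m) i p" by simp
    qed
  qed
qed



lemma cinf_isCont: "cinf M f \<Longrightarrow> z \<in> M \<Longrightarrow> isCont f z"
  by (erule cinf.cases) (auto intro: has_derivative_continuous)

lemma vanish_limit: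
  fixes f :: "complex \<Rightarrow> complex"
  assumes "isCont f z" "eventually (\<lambda>w. f w = 0) (at z)"
  shows "f z = 0"
proof -
  have "(f \<longlongrightarrow> f z) (at z)" using assms(1) isCont_def by blast
  moreover have "(f \<longlongrightarrow> 0) (at z)" by (rule tendsto_eventually[OF assms(2)])
  ultimately show ?thesis using tendsto_unique[OF at_neq_bot] by blast
qed

lemma eventually_analytic:
  assumes "f meromorphic_on M" "z \<in> M"
  shows "eventually (\<lambda>w. f analytic_on {w}) (at z)"
proof -
  have "isolated_singularity_at f z" using assms meromorphic_on_altdef by blast
  then obtain r where r: "r > 0" "f analytic_on ball z r - {z}" unfolding isolated_singularity_at_def by blast
  show ?thesis unfolding eventually_at
  proof (intro exI[of _ r] conjI allI impI ballI)
    fix x assume "x \<noteq> z \<and> dist x z < r"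
    then have "x \<in> ball z r - {z}" by (auto simp: dist_commute)
    then show "f analytic_on {x}" using r(2) analytic_on_subset by blast
  qed (use r in auto)
qed

lemma final_alg:
  fixes Phi :: "complex \<Rightarrow> cmat"
  assumes om: "in_OmegaR n r Phi"
    and s1: "\<forall>l\<in>sphere 0 1. \<forall>m\<in>sphere 0 1. meq n (Phi (l*m)) (mmul n (Phi l) (Phi m))"
  shows "(even r \<longrightarrow> real_grassmannian_pt n (Phi (-1))) \<and> (odd r \<longrightarrow> orth_cx_structure_pt n (Phi (-1)))"
proof -
  define X where "X = Phi (-1)"
  have m1: "(-1::complex) \<in> sphere 0 1" by simp
  have uX: "meq n (mmul n (ctr X) X) idm" using om m1 unfolding in_OmegaR_def unitary_mat_def X_def by blast
  have bX: "meq n (mmul n (btr n X) X) (msc ((-1)^r) idm)" using om m1 unfolding in_OmegaR_def X_def by blast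
  have based: "meq n (Phi 1) idm" using om unfolding in_OmegaR_def by blast
  have XX: "meq n (mmul n X X) idm"
    using s1 m1 based unfolding X_def meq_def by (metis mult_minus1 minus_minus)
  have H: "meq n (ctr X) X" by (rule inv_unique[OF uX XX])
  have He: "cnj (X j i) = X i j" if "i\<in>{1..n}" "j\<in>{1..n}" for i j
    using H that unfolding meq_def ctr_def by blast
  have XXe: "(\<Sum>k\<in>{1..n}. X i k * X k j) = idm i j" if "i\<in>{1..n}" "j\<in>{1..n}" for i j
    using XX that unfolding meq_def mmul_def by blast
  have rev: "n + 1 - i \<in> {1..n}" if "i\<in>{1..n}" for i using that by auto
  have idrev: "idm (n + 1 - i) (n + 1 - j) = idm i j" if "i\<in>{1..n}" "j\<in>{1..n}" for i j
    using that by (auto simp: idm_def)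
  show ?thesis
  proof (intro conjI impI)
    assume ev: "even r"
    have "meq n (mmul n (btr n X) X) idm" using bX ev unfolding meq_def msc_def by simp
    then have Bt: "meq n (btr n X) X" by (rule inv_unique[OF _ XX])
    have Bte: "X (n + 1 - j) (n + 1 - i) = X i j" if "i\<in>{1..n}" "j\<in>{1..n}" for i j
      using Bt that unfolding meq_def btr_def by blast
    define P where "P i j = (X i j + idm i j) / 2" for i j
    show "real_grassmannian_pt n (Phi (-1))"
      unfolding real_grassmannian_pt_def X_def[symmetric]
    proof (intro bexI[of _ 1] exI[of _ P] conjI)
      show "meq n (mmul n P P) P" unfolding meq_def mmul_def
      proof (intro ballI)
        fix i j assume ij: "i\<in>{1..n}" "j\<in>{1..n}"
        have "(\<Sum>k\<in>{1..n}. P i k * P k j) = ((\<Sum>k\<in>{1..n}. X i k * X k j) + (\<Sum>k\<in>{1..n}. X i k * idm k j)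
               + (\<Sum>k\<in>{1..n}. idm i k * X k j) + (\<Sum>k\<in>{1..n}. idm i k * idm k j)) / 4"
        proof -
          have "(\<Sum>k\<in>{1..n}. P i k * P k j) = (\<Sum>k\<in>{1..n}. (X i k * X k j + X i k * idm k j + idm i k * X k j + idm i k * idm k j) / 4)"
            by (intro sum.cong) (simp_all add: P_def field_simps)
          also have "\<dots> = ((\<Sum>k\<in>{1..n}. X i k * X k j) + (\<Sum>k\<in>{1..n}. X i k * idm k j)
               + (\<Sum>k\<in>{1..n}. idm i k * X k j) + (\<Sum>k\<in>{1..n}. idm i k * idm k j)) / 4"
            by (simp only: sum_divide_distrib[symmetric] sum.distrib)
          finally show ?thesis .
        qed
        also have "\<dots> = (idm i j + X i j + X i j + idm i j) / 4"
          using ij XXe sum_idm_right[where f="\<lambda>k. X i k" and n=n and j=j]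
            sum_idm_left[where f="\<lambda>k. X k j" and n=n and i=i]
            sum_idm_left[where f="\<lambda>k. idm k j" and n=n and i=i] by simp
        also have "\<dots> = P i j" by (simp add: P_def field_simps)
        finally show "(\<Sum>k\<in>{1..n}. P i k * P k j) = P i j" .
      qed
      show "meq n (ctr P) P" unfolding meq_def ctr_def
      proof (intro ballI)
        fix i j assume ij: "i\<in>{1..n}" "j\<in>{1..n}"
        have "idm j i = idm i j" by (auto simp: idm_def)
        moreover have "cnj (idm i j) = idm i j" by (simp add: idm_def)
        ultimately show "cnj (P j i) = P i j" using He[OF ij] by (simp add: P_def)
      qed
      show "real_mat n P" unfolding real_mat_def
      proof (intro ballI)
        fix i j assume ij: "i\<in>{1..n}" "j\<in>{1..n}"
        have "cnj (X (n + 1 - i) (n + 1 - j)) = X (n + 1 - j) (n + 1 - i)" using He rev ij by blast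
        also have "\<dots> = X i j" using Bte ij by blast
        finally have "cnj (X (n + 1 - i) (n + 1 - j)) = X i j" .
        moreover have "cnj (idm i j) = idm i j" by (simp add: idm_def)
        ultimately show "cnj (P (n + 1 - i) (n + 1 - j)) = P i j" using idrev[OF ij] by (simp add: P_def)
      qed
      show "meq n (msc 1 X) (\<lambda>i j. 2 * P i j - idm i j)"
        unfolding meq_def msc_def P_def by (simp add: field_simps)
    qed simp
  next
    assume od: "odd r"
    have "meq n (mmul n (msc (-1) (btr n X)) X) idm"
      using bX od unfolding meq_def msc_def mmul_def by (simp add: sum_negf)
    then have Bt: "meq n (msc (-1) (btr n X)) X" by (rule inv_unique[OF _ XX])
    have Bte: "- X (n + 1 - j) (n + 1 - i) = X i j" if "i\<in>{1..n}" "j\<in>{1..n}" for i j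
      using Bt that unfolding meq_def btr_def msc_def by auto
    show "orth_cx_structure_pt n (Phi (-1))"
      unfolding orth_cx_structure_pt_def X_def[symmetric] Let_def
    proof (intro bexI[of _ 1] conjI)
      show "real_mat n (msc (1 * \<i>) X)" unfolding real_mat_def msc_def
      proof (intro ballI)
        fix i j assume ij: "i\<in>{1..n}" "j\<in>{1..n}"
        have "cnj (X (n + 1 - i) (n + 1 - j)) = X (n + 1 - j) (n + 1 - i)" using He rev ij by blast
        also have "\<dots> = - X i j" using Bte[OF ij] by (metis minus_minus)
        finally show "cnj (1 * \<i> * X (n + 1 - i) (n + 1 - j)) = 1 * \<i> * X i j" by simp
      qed
      show "meq n (mmul n (msc (1 * \<i>) X) (msc (1 * \<i>) X)) (msc (- 1) idm)"
        unfolding meq_def mmul_def msc_def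
      proof (intro ballI)
        fix i j assume ij: "i\<in>{1..n}" "j\<in>{1..n}"
        have "(\<Sum>k\<in>{1..n}. 1 * \<i> * X i k * (1 * \<i> * X k j)) = - (\<Sum>k\<in>{1..n}. X i k * X k j)"
          by (simp add: sum_negf[symmetric] algebra_simps)
        then show "(\<Sum>k\<in>{1..n}. 1 * \<i> * X i k * (1 * \<i> * X k j)) = - 1 * idm i j" using XXe[OF ij] by simp
      qed
      show "meq n (mmul n (btr n (msc (1 * \<i>) X)) (msc (1 * \<i>) X)) idm"
        unfolding meq_def mmul_def msc_def btr_def
      proof (intro ballI)
        fix i j assume ij: "i\<in>{1..n}" "j\<in>{1..n}"
        have "(\<Sum>k\<in>{1..n}. 1 * \<i> * X (n + 1 - k) (n + 1 - i) * (1 * \<i> * X k j))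
            = (\<Sum>k\<in>{1..n}. X i k * X k j)"
        proof (intro sum.cong refl)
          fix k assume k: "k \<in> {1..n}"
          have "X (n + 1 - k) (n + 1 - i) = - X i k" using Bte[OF ij(1) k] by (metis minus_minus)
          then show "1 * \<i> * X (n + 1 - k) (n + 1 - i) * (1 * \<i> * X k j) = X i k * X k j"
            by (simp add: algebra_simps)
        qed
        then show "(\<Sum>k\<in>{1..n}. 1 * \<i> * X (n + 1 - k) (n + 1 - i) * (1 * \<i> * X k j)) = idm i j"
          using XXe[OF ij] by simp
      qed
    qed simp
  qed
qed



theorem proposition4p7:
  fixes n r :: nat and M :: "complex set" and Phi :: "complex \<Rightarrow> complex \<Rightarrow> cmat"
  assumes "open M" and "connected M" and "M \<noteq> {}"
    and "1 \<le> n" and "n \<le> 4"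
    and "ext_sol n r M Phi"
    and "canonical_type n r M Phi"
  shows "S1_invariant n M Phi \<and>
         (\<forall>z\<in>M. \<forall>l\<in>sphere 0 1. meq n (mmul n (Phi z l) (Phi z (-1))) (Phi z (- l))) \<and>
         (even r \<longrightarrow> (\<forall>z\<in>M. real_grassmannian_pt n (Phi z (-1)))) \<and>
         (odd r \<longrightarrow> (\<exists>m. n = 2 * m) \<and> (\<forall>z\<in>M. orth_cx_structure_pt n (Phi z (-1))))"
proof -
  have E1: "\<forall>z\<in>M. in_OmegaR n r (Phi z)"
    and E2: "\<forall>l\<in>sphere 0 1. \<forall>i\<in>{1..n}. \<forall>j\<in>{1..n}. cinf M (\<lambda>z. Phi z l i j)"
    using assms(6) unfolding ext_sol_def by blast+
  obtain xi c where canon: "canonical_xi n r xi"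
    and mero: "\<forall>i\<in>{1..n}. \<forall>j\<in>{1..n}. \<forall>k<nat (xi i - xi j). c i j k meromorphic_on M"
    and good: "\<forall>z\<in>M. (\<forall>i\<in>{1..n}. \<forall>j\<in>{1..n}. \<forall>k<nat (xi i - xi j). c i j k analytic_on {z}) \<longrightarrow>
           (\<forall>l. meq n (mmul n (btr n (Amat xi c z l)) (Amat xi c z l)) idm) \<and>
           based_unitary_factor n (Phi z) (\<lambda>l. mmul n (Amat xi c z l) (gamma_xi xi l))"
    using assms(7) unfolding canonical_type_def by blast
  have xi: "canonical_xi n r xi" "1 \<le> n" "n \<le> 4" using canon assms by auto
  define G where "G w \<longleftrightarrow> w \<in> M \<and> (\<forall>i\<in>{1..n}. \<forall>j\<in>{1..n}. \<forall>k\<in>{..<nat (xi i - xi j)}. c i j k analytic_on {w})" for w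
  have S1good: "\<forall>l\<in>sphere 0 1. \<forall>m\<in>sphere 0 1. meq n (Phi w (l*m)) (mmul n (Phi w l) (Phi w m))"
    if "G w" for w
  proof -
    have w: "w \<in> M" and an: "\<forall>i\<in>{1..n}. \<forall>j\<in>{1..n}. \<forall>k<nat (xi i - xi j). c i j k analytic_on {w}"
      using that unfolding G_def by auto
    have "(\<forall>l. meq n (mmul n (btr n (Amat xi c w l)) (Amat xi c w l)) idm) \<and>
           based_unitary_factor n (Phi w) (\<lambda>l. mmul n (Amat xi c w l) (gamma_xi xi l))"
      using good w an by blast
    then show ?thesis using good_S1[OF xi E1[rule_format, OF w]] by blast
  qed
  have evG: "eventually G (at z)" if z: "z \<in> M" for z
  proof -
    have "eventually (\<lambda>w. \<forall>i\<in>{1..n}. \<forall>j\<in>{1..n}. \<forall>k\<in>{..<nat (xi i - xi j)}. c i j k analytic_on {w}) (at z)"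
      using mero z by (intro eventually_ball_finite ballI eventually_analytic) auto
    moreover have "eventually (\<lambda>w. w \<in> M) (at z)" by (rule eventually_at_in_open'[OF assms(1) z])
    ultimately show ?thesis unfolding G_def by (simp add: eventually_conj_iff)
  qed
  have S1: "S1_invariant n M Phi"
    unfolding S1_invariant_def
  proof (intro ballI)
    fix z l m assume z: "z \<in> M" and l: "l \<in> sphere (0::complex) 1" and m: "m \<in> sphere (0::complex) 1"
    have lm: "l * m \<in> sphere 0 1" using l m by (simp add: norm_mult)
    show "meq n (Phi z (l * m)) (mmul n (Phi z l) (Phi z m))"
      unfolding meq_def
    proof (intro ballI)
      fix i j assume ij: "i\<in>{1..n}" "j\<in>{1..n}"
      define f where "f w = Phi w (l*m) i j - (\<Sum>k\<in>{1..n}. Phi w l i k * Phi w m k j)" for w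
      have c1: "isCont (\<lambda>w. Phi w (l*m) i j) z" using E2 lm ij z cinf_isCont by blast
      have c2: "isCont (\<lambda>w. Phi w l i k) z" if "k\<in>{1..n}" for k using E2 l ij that z cinf_isCont by blast
      have c3: "isCont (\<lambda>w. Phi w m k j) z" if "k\<in>{1..n}" for k using E2 m ij that z cinf_isCont by blast
      have "isCont f z" unfolding f_def using c1 c2 c3 by (intro continuous_intros) auto
      moreover have "eventually (\<lambda>w. f w = 0) (at z)"
        using evG[OF z]
      proof (rule eventually_mono)
        fix w assume "G w"
        then have "meq n (Phi w (l*m)) (mmul n (Phi w l) (Phi w m))" using S1good l m by blast
        then show "f w = 0" using ij unfolding meq_def mmul_def f_def by auto
      qed
      ultimately have "f z = 0" by (rule vanish_limit)
      then show "Phi z (l * m) i j = mmul n (Phi z l) (Phi z m) i j" unfolding f_def mmul_def by simp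
    qed
  qed
  have S1z: "\<forall>l\<in>sphere 0 1. \<forall>m\<in>sphere 0 1. meq n (Phi z (l*m)) (mmul n (Phi z l) (Phi z m))"
    if "z \<in> M" for z using S1 that unfolding S1_invariant_def by blast
  have part2: "\<forall>z\<in>M. \<forall>l\<in>sphere 0 1. meq n (mmul n (Phi z l) (Phi z (-1))) (Phi z (- l))"
  proof (intro ballI)
    fix z l assume z: "z \<in> M" and l: "l \<in> sphere (0::complex) 1"
    have "meq n (Phi z (l * -1)) (mmul n (Phi z l) (Phi z (-1)))" 
      using S1z[OF z] l by (metis norm_minus_cancel norm_one mem_sphere_0)
    then show "meq n (mmul n (Phi z l) (Phi z (-1))) (Phi z (- l))" unfolding meq_def by simp
  qed
  have alg: "(even r \<longrightarrow> real_grassmannian_pt n (Phi z (-1))) \<and> (odd r \<longrightarrow> orth_cx_structure_pt n (Phi z (-1)))"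
    if "z \<in> M" for z by (rule final_alg[OF E1[rule_format, OF that] S1z[OF that]])
  have neven: "odd r \<longrightarrow> (\<exists>m. n = 2 * m)"
  proof
    assume "odd r"
    then have "n = 2 \<or> n = 4" using xi_cases[OF xi] by auto
    then show "\<exists>m. n = 2 * m" by auto
  qed
  show ?thesis using S1 part2 alg neven by blast
qed

thm_deps proposition4p7

end
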